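(* For every real number $\kappa$ with $0\le\kappa<\frac58$ there exists a positive integer $n_\kappa$ such that for every integer $n\ge n_\kappa$ and every doubly stochastic $n\times n$ matrix $\mathcal M$, there exists a directed $(2n-1)$-regular multigraph $G$ on vertex set $[n]$ whose throughput with respect to $\mathcal M$ is at least $\kappa$ (i.e., $G$ hosts $\kappa\mathcal M$).
   Context: Let $n\ge 1$ and $[n]=\{1,\dots,n\}$. Networks are finite directed multigraphs on vertex set $[n]$; self-loops and parallel arcs are allowed. A directed multigraph is directed $r$-regular if every vertex has exactly $r$ outgoing and exactly $r$ incoming arcs (a self-loop at $v$ counts as one outgoing and one incoming arc of $v$). A path is a non-empty sequence of arcs $((u_1,v_1),\dots,(u_\ell,v_\ell))$ with $v_i=u_{i+1}$ for $i<\ell$; it goes from $u_1$ to $v_\ell$ and has length $\ell\ge 1$ (so demand from a vertex to itself must use at least one arc, e.g. a self-loop). An $n\times n$ matrix is doubly stochastic if all entries are nonnegative and every row and every column sums to $1$. In a directed $(2n-1)$-regular multigraph $G$ on $[n]$ every arc has capacity $\frac{1}{2n-1}$. $G$ hosts a nonnegative $n\times n$ matrix $\mathcal M=(a_{i,j})$ if there is a finite collection $\{(P_k,d_k)\}$, where each $P_k$ is a path in $G$ from some $s_k$ to some $t_k$ and $d_k\ge 0$, such that $\sum_{k:\,s_k=u,\,t_k=v} d_k=a_{u,v}$ for all $u,v\in[n]$, and for every arc $e$ of $G$ (parallel arcs are distinct arcs) $\sum_{k:\,e\in P_k} d_k\le \frac{1}{2n-1}$. The throughput of $G$ with respect to a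 doubly stochastic $\mathcal M$ is the largest $\theta$ such that $G$ hosts $\theta\mathcal M$. *)

theory Defs
  imports Complex_Main
begin

text \<open>A directed multigraph on vertex set [n] = {1..n} is given by a multiplicity
  function mult :: nat => nat => nat; mult u v is the number of (distinct, parallel)
  arcs from u to v (self-loops allowed).\<close>

type_synonym arc = "nat \<times> nat \<times> nat"

definition arcs :: "nat \<Rightarrow> (nat \<Rightarrow> nat \<Rightarrow> nat) \<Rightarrow> arc set" where
  "arcs n mult = {(u, v, i). u \<in> {1..n} \<and> v \<in> {1..n} \<and> i < mult u v}"

definition arc_tail :: "arc \<Rightarrow> nat" where "arc_tail e = fst e"
definition arc_head :: "arc \<Rightarrow> nat" where "arc_head e = fst (snd e)"

definition regular_multigraph :: "nat \<Rightarrow> nat \<Rightarrow> (nat \<Rightarrow> nat \<Rightarrow> nat) \<Rightarrow> bool" where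
  "regular_multigraph n r mult \<longleftrightarrow>
     (\<forall>u\<in>{1..n}. (\<Sum>v=1..n. mult u v) = r) \<and>
     (\<forall>v\<in>{1..n}. (\<Sum>u=1..n. mult u v) = r)"

definition is_path :: "nat \<Rightarrow> (nat \<Rightarrow> nat \<Rightarrow> nat) \<Rightarrow> arc list \<Rightarrow> bool" where
  "is_path n mult p \<longleftrightarrow> p \<noteq> [] \<and> set p \<subseteq> arcs n mult \<and>
     (\<forall>k. Suc k < length p \<longrightarrow> arc_head (p ! k) = arc_tail (p ! Suc k))"

definition path_src :: "arc list \<Rightarrow> nat" where "path_src p = arc_tail (hd p)"
definition path_tgt :: "arc list \<Rightarrow> nat" where "path_tgt p = arc_head (last p)"

definition doubly_stochastic :: "nat \<Rightarrow> (nat \<Rightarrow> nat \<Rightarrow> real) \<Rightarrow> bool" where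
  "doubly_stochastic n M \<longleftrightarrow>
     (\<forall>i\<in>{1..n}. \<forall>j\<in>{1..n}. M i j \<ge> 0) \<and>
     (\<forall>i\<in>{1..n}. (\<Sum>j=1..n. M i j) = 1) \<and>
     (\<forall>j\<in>{1..n}. (\<Sum>i=1..n. M i j) = 1)"

definition hosts :: "nat \<Rightarrow> (nat \<Rightarrow> nat \<Rightarrow> nat) \<Rightarrow> (nat \<Rightarrow> nat \<Rightarrow> real) \<Rightarrow> bool" where
  "hosts n mult A \<longleftrightarrow>
     (\<exists>(K::nat) (P::nat \<Rightarrow> arc list) (d::nat \<Rightarrow> real).
        (\<forall>k<K. is_path n mult (P k) \<and> d k \<ge> 0) \<and>
        (\<forall>u\<in>{1..n}. \<forall>v\<in>{1..n}.
            (\<Sum>k\<in>{k. k < K \<and> path_src (P k) = u \<and> path_tgt (P k) = v}. d k) = A u v) \<and>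
        (\<forall>e\<in>arcs n mult.
            (\<Sum>k\<in>{k. k < K \<and> e \<in> set (P k)}. d k) \<le> 1 / real (2 * n - 1)))"

end

theory Submission
  imports Defs
begin

lemma lin_dep:
  fixes a :: "'q \<Rightarrow> 'v \<Rightarrow> real"
  assumes "finite Q" "finite V" "card Q < card V"
  shows "\<exists>x. (\<exists>i\<in>V. x i \<noteq> 0) \<and> (\<forall>q\<in>Q. (\<Sum>i\<in>V. a q i * x i) = 0)"
  using assms
proof (induction Q arbitrary: V a rule: finite_induct)
  case empty
  then obtain i where i: "i \<in> V" by (metis card.empty card_gt_0_iff equals0I)
  show ?case by (rule exI[of _ "\<lambda>j. if j = i then 1 else 0"]) (use i in auto)
next
  case (insert q Q V a)
  show ?case
  proof (cases "\<forall>i\<in>V. a q i = 0")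
    case True
    have "card Q < card V" using insert by simp
    then obtain x where x: "\<exists>i\<in>V. x i \<noteq> 0" "\<forall>q\<in>Q. (\<Sum>i\<in>V. a q i * x i) = 0"
      using insert.IH[OF insert.prems(1)] by blast
    show ?thesis using x True by (intro exI[of _ x]) auto
  next
    case False
    then obtain j where j: "j \<in> V" "a q j \<noteq> 0" by blast
    define V' where "V' = V - {j}"
    define b where "b = (\<lambda>q' i. a q' i - a q' j * a q i / a q j)"
    have fV': "finite V'" using insert.prems V'_def by simp
    have cV': "card V' = card V - 1" using j insert.prems V'_def by simp
    have "card Q < card V'" using insert cV' by simp
    then obtain y where y: "\<exists>i\<in>V'. y i \<noteq> 0" "\<forall>q'\<in>Q. (\<Sum>i\<in>V'. b q' i * y i) = 0"
      using insert.IH[OF fV'] by blast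
    define x where "x = (\<lambda>i. if i = j then - (\<Sum>i\<in>V'. a q i * y i) / a q j else y i)"
    have splitV: "\<And>f. (\<Sum>i\<in>V. f i) = f j + (\<Sum>i\<in>V'. f i)"
      using j insert.prems V'_def by (metis sum.remove)
    have xV': "\<And>i. i \<in> V' \<Longrightarrow> x i = y i" using V'_def x_def by auto
    have eqq: "(\<Sum>i\<in>V. a q i * x i) = 0"
    proof -
      have cg: "(\<Sum>i\<in>V'. a q i * x i) = (\<Sum>i\<in>V'. a q i * y i)"
        by (rule sum.cong) (auto simp: xV')
      have "(\<Sum>i\<in>V. a q i * x i) = a q j * x j + (\<Sum>i\<in>V'. a q i * y i)"
        using splitV[of "\<lambda>i. a q i * x i"] cg by simp
      also have "\<dots> = 0" using j by (simp add: x_def)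
      finally show ?thesis .
    qed
    have eqQ: "(\<Sum>i\<in>V. a q' i * x i) = 0" if q': "q' \<in> Q" for q'
    proof -
      have cg: "(\<Sum>i\<in>V'. a q' i * x i) = (\<Sum>i\<in>V'. a q' i * y i)"
        by (rule sum.cong) (auto simp: xV')
      have "(\<Sum>i\<in>V. a q' i * x i) = a q' j * x j + (\<Sum>i\<in>V'. a q' i * y i)"
        using splitV[of "\<lambda>i. a q' i * x i"] cg by simp
      also have "\<dots> = (\<Sum>i\<in>V'. b q' i * y i)"
        using j by (simp add: x_def b_def algebra_simps sum_subtractf sum_divide_distrib sum_distrib_left)
      also have "\<dots> = 0" using y q' by blast
      finally show ?thesis .
    qed
    have "\<exists>i\<in>V. x i \<noteq> 0" using y xV' V'_def by auto
    then show ?thesis using eqq eqQ by (intro exI[of _ x]) auto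
  qed
qed

lemma sum_row_conv:
  fixes f :: "nat \<times> nat \<Rightarrow> real"
  assumes "finite C" "E \<subseteq> R \<times> C" "finite E"
  shows "(\<Sum>c\<in>C. if (r, c) \<in> E then f (r, c) else 0) = (\<Sum>e\<in>E. if fst e = r then f e else 0)"
proof -
  have "(\<Sum>c\<in>C. if (r, c) \<in> E then f (r, c) else 0) = (\<Sum>c\<in>{c\<in>C. (r,c)\<in>E}. f (r, c))"
    using assms by (simp add: sum.inter_filter)
  also have "\<dots> = (\<Sum>e\<in>Pair r ` {c\<in>C. (r,c)\<in>E}. f e)"
    by (subst sum.reindex) (auto simp: inj_on_def)
  also have "Pair r ` {c\<in>C. (r,c)\<in>E} = {e\<in>E. fst e = r}" using assms by force
  also have "(\<Sum>e\<in>{e\<in>E. fst e = r}. f e) = (\<Sum>e\<in>E. if fst e = r then f e else 0)"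
    using assms by (simp add: sum.inter_filter)
  finally show ?thesis .
qed

lemma sum_col_conv:
  fixes f :: "nat \<times> nat \<Rightarrow> real"
  assumes "finite R" "E \<subseteq> R \<times> C" "finite E"
  shows "(\<Sum>r\<in>R. if (r, c) \<in> E then f (r, c) else 0) = (\<Sum>e\<in>E. if snd e = c then f e else 0)"
proof -
  have "(\<Sum>r\<in>R. if (r, c) \<in> E then f (r, c) else 0) = (\<Sum>r\<in>{r\<in>R. (r,c)\<in>E}. f (r, c))"
    using assms by (simp add: sum.inter_filter)
  also have "\<dots> = (\<Sum>e\<in>(\<lambda>r. (r,c)) ` {r\<in>R. (r,c)\<in>E}. f e)"
    by (subst sum.reindex) (auto simp: inj_on_def)
  also have "(\<lambda>r. (r,c)) ` {r\<in>R. (r,c)\<in>E} = {e\<in>E. snd e = c}" using assms by force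
  also have "(\<Sum>e\<in>{e\<in>E. snd e = c}. f e) = (\<Sum>e\<in>E. if snd e = c then f e else 0)"
    using assms by (simp add: sum.inter_filter)
  finally show ?thesis .
qed

lemma not_int_floor_ceil:
  fixes y :: real
  assumes "y \<notin> \<int>"
  shows "of_int \<lfloor>y\<rfloor> < y" "y < of_int \<lceil>y\<rceil>"
proof -
  have "of_int \<lfloor>y\<rfloor> \<noteq> y" using assms by (metis Ints_of_int)
  then show "of_int \<lfloor>y\<rfloor> < y" using of_int_floor_le[of y] by linarith
  have "of_int \<lceil>y\<rceil> \<noteq> y" using assms by (metis Ints_of_int)
  then show "y < of_int \<lceil>y\<rceil>" using le_of_int_ceiling[of y] by linarith
qed

lemma deg_two:
  fixes A :: "nat \<Rightarrow> real" and C :: "nat set"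
  assumes "finite C" "(\<Sum>c\<in>C. A c) \<in> \<int>" "c1 \<in> C" "A c1 \<notin> \<int>"
  shows "2 \<le> card {c\<in>C. A c \<notin> \<int>}"
proof (rule ccontr)
  define F where "F = {c\<in>C. A c \<notin> \<int>}"
  assume "\<not> 2 \<le> card {c\<in>C. A c \<notin> \<int>}"
  then have c2: "card F < 2" unfolding F_def by simp
  have "c1 \<in> F" using assms unfolding F_def by simp
  moreover have "finite F" using assms(1) unfolding F_def by simp
  ultimately have "card F \<noteq> 0" by auto
  with c2 have "card F = 1" by linarith
  then obtain c where c: "F = {c}" by (meson card_1_singletonE)
  have sub: "F \<subseteq> C" unfolding F_def by auto
  have "(\<Sum>c\<in>C. A c) = (\<Sum>c\<in>C - F. A c) + (\<Sum>c\<in>F. A c)"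
    by (rule sum.subset_diff[OF sub assms(1)])
  moreover have "(\<Sum>c\<in>C - F. A c) \<in> \<int>" by (rule Ints_sum) (simp add: F_def)
  ultimately have "(\<Sum>c\<in>F. A c) \<in> \<int>" using assms(2)
    by (metis Ints_diff add_diff_cancel_left')
  then have "A c \<in> \<int>" using c by simp
  moreover have "c \<in> F" using c by simp
  ultimately show False unfolding F_def by simp
qed

lemma round_int:
  fixes R C :: "nat set"
  assumes fR: "finite R" and fC: "finite C"
  shows "\<And>A::nat \<Rightarrow> nat \<Rightarrow> real. card {e \<in> R \<times> C. A (fst e) (snd e) \<notin> \<int>} = N \<Longrightarrow>
    (\<forall>r\<in>R. (\<Sum>c\<in>C. A r c) \<in> \<int>) \<Longrightarrow> (\<forall>c\<in>C. (\<Sum>r\<in>R. A r c) \<in> \<int>) \<Longrightarrow>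
    \<exists>X. (\<forall>r\<in>R. \<forall>c\<in>C. X r c \<in> \<int> \<and> of_int \<lfloor>A r c\<rfloor> \<le> X r c \<and> X r c \<le> of_int \<lceil>A r c\<rceil>) \<and>
        (\<forall>r\<in>R. (\<Sum>c\<in>C. X r c) = (\<Sum>c\<in>C. A r c)) \<and>
        (\<forall>c\<in>C. (\<Sum>r\<in>R. X r c) = (\<Sum>r\<in>R. A r c))"
proof (induction N rule: less_induct)
  case (less N A)
  define E where "E = {e \<in> R \<times> C. A (fst e) (snd e) \<notin> \<int>}"
  have ER: "E \<subseteq> R \<times> C" by (auto simp: E_def)
  have fE: "finite E" using ER fR fC finite_subset by blast
  show ?case
  proof (cases "E = {}")
    case True
    have "\<forall>r\<in>R. \<forall>c\<in>C. A r c \<in> \<int>" using True by (auto simp: E_def)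
    then show ?thesis by (intro exI[of _ A]) (auto elim!: Ints_cases)
  next
    case False
    define R' where "R' = fst ` E"
    define C' where "C' = snd ` E"
    have fR': "finite R'" "finite C'" using fE by (auto simp: R'_def C'_def)
    have rowdeg: "2 \<le> card {e\<in>E. fst e = r}" if rr: "r \<in> R'" for r
    proof -
      obtain c1 where e1: "(r,c1) \<in> E" using rr unfolding R'_def by auto
      have rR: "r \<in> R" and c1C: "c1 \<in> C" "A r c1 \<notin> \<int>" using e1 by (auto simp: E_def)
      have "2 \<le> card {c\<in>C. A r c \<notin> \<int>}"
        using deg_two[of C "A r" c1] fC less.prems(2) rR c1C by auto
      also have "card {c\<in>C. A r c \<notin> \<int>} = card (Pair r ` {c\<in>C. A r c \<notin> \<int>})"
        by (rule card_image[symmetric]) (auto simp: inj_on_def)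
      also have "Pair r ` {c\<in>C. A r c \<notin> \<int>} = {e\<in>E. fst e = r}"
      proof (rule set_eqI)
        fix e :: "nat \<times> nat" obtain p q where "e = (p,q)" by (cases e)
        then show "e \<in> Pair r ` {c\<in>C. A r c \<notin> \<int>} \<longleftrightarrow> e \<in> {e\<in>E. fst e = r}" using rR by (auto simp: E_def)
      qed
      finally show ?thesis .
    qed
    have coldeg: "2 \<le> card {e\<in>E. snd e = c}" if cc: "c \<in> C'" for c
    proof -
      obtain r1 where e1: "(r1,c) \<in> E" using cc unfolding C'_def by auto
      have cC: "c \<in> C" and r1R: "r1 \<in> R" "A r1 c \<notin> \<int>" using e1 by (auto simp: E_def)
      have "2 \<le> card {r\<in>R. A r c \<notin> \<int>}"
        using deg_two[of R "\<lambda>r. A r c" r1] fR less.prems(3) cC r1R by auto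
      also have "card {r\<in>R. A r c \<notin> \<int>} = card ((\<lambda>r. (r,c)) ` {r\<in>R. A r c \<notin> \<int>})"
        by (rule card_image[symmetric]) (auto simp: inj_on_def)
      also have "(\<lambda>r. (r,c)) ` {r\<in>R. A r c \<notin> \<int>} = {e\<in>E. snd e = c}"
      proof (rule set_eqI)
        fix e :: "nat \<times> nat" obtain p q where "e = (p,q)" by (cases e)
        then show "e \<in> (\<lambda>r. (r,c)) ` {r\<in>R. A r c \<notin> \<int>} \<longleftrightarrow> e \<in> {e\<in>E. snd e = c}" using cC by (auto simp: E_def)
      qed
      finally show ?thesis .
    qed
    have cardR: "card E = (\<Sum>r\<in>R'. card {e\<in>E. fst e = r})"
    proof -
      have "card E = (\<Sum>e\<in>E. 1::nat)" by simp
      also have "\<dots> = (\<Sum>r\<in>R'. \<Sum>e\<in>{x\<in>E. fst x = r}. 1)"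
        unfolding R'_def by (rule sum.image_gen[OF fE])
      finally show ?thesis by simp
    qed
    have cardC: "card E = (\<Sum>c\<in>C'. card {e\<in>E. snd e = c})"
    proof -
      have "card E = (\<Sum>e\<in>E. 1::nat)" by simp
      also have "\<dots> = (\<Sum>c\<in>C'. \<Sum>e\<in>{x\<in>E. snd x = c}. 1)"
        unfolding C'_def by (rule sum.image_gen[OF fE])
      finally show ?thesis by simp
    qed
    have "2 * card R' \<le> card E"
    proof -
      have "2 * card R' = (\<Sum>r\<in>R'. 2::nat)" by simp
      also have "\<dots> \<le> (\<Sum>r\<in>R'. card {e\<in>E. fst e = r})" by (rule sum_mono) (rule rowdeg)
      finally show ?thesis using cardR by simp
    qed
    moreover have "2 * card C' \<le> card E"
    proof -
      have "2 * card C' = (\<Sum>c\<in>C'. 2::nat)" by simp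
      also have "\<dots> \<le> (\<Sum>c\<in>C'. card {e\<in>E. snd e = c})" by (rule sum_mono) (rule coldeg)
      finally show ?thesis using cardC by simp
    qed
    ultimately have cE: "card R' + card C' \<le> card E" by linarith
    obtain c0 where c0: "c0 \<in> C'" using False C'_def by blast
    define Q where "Q = Inl ` R' \<union> Inr ` (C' - {c0})"
    have fQ: "finite Q" using fR' by (simp add: Q_def)
    have "card Q = card R' + card (C' - {c0})"
      unfolding Q_def by (subst card_Un_disjoint) (auto simp: fR' card_image)
    also have "card (C' - {c0}) = card C' - 1" using c0 fR' by simp
    finally have cQ: "card Q = card R' + (card C' - 1)" .
    have "card C' > 0" using c0 fR' card_gt_0_iff by blast
    then have "card Q < card E" using cQ cE by linarith
    define a where "a = (\<lambda>q (e::nat\<times>nat). case q of Inl r \<Rightarrow> if fst e = r then 1 else (0::real)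
                                           | Inr c \<Rightarrow> if snd e = c then 1 else 0)"
    obtain x where x1: "\<exists>i\<in>E. x i \<noteq> 0" and x2: "\<forall>q\<in>Q. (\<Sum>i\<in>E. a q i * x i) = 0"
      using lin_dep[OF fQ fE \<open>card Q < card E\<close>] by blast
    have xrow: "(\<Sum>e\<in>E. if fst e = r then x e else 0) = 0" for r
    proof (cases "r \<in> R'")
      case True
      then have "Inl r \<in> Q" by (simp add: Q_def)
      then have "(\<Sum>i\<in>E. a (Inl r) i * x i) = 0" using x2 by blast
      moreover have "(\<Sum>i\<in>E. a (Inl r) i * x i) = (\<Sum>e\<in>E. if fst e = r then x e else 0)"
        by (rule sum.cong) (auto simp: a_def)
      ultimately show ?thesis by simp
    next
      case False
      then have "\<forall>e\<in>E. fst e \<noteq> r" by (auto simp: R'_def)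
      then show ?thesis by simp
    qed
    have xcol': "(\<Sum>e\<in>E. if snd e = c then x e else 0) = 0" if "c \<noteq> c0" for c
    proof (cases "c \<in> C'")
      case True
      then have "Inr c \<in> Q" using that by (simp add: Q_def)
      then have "(\<Sum>i\<in>E. a (Inr c) i * x i) = 0" using x2 by blast
      moreover have "(\<Sum>i\<in>E. a (Inr c) i * x i) = (\<Sum>e\<in>E. if snd e = c then x e else 0)"
        by (rule sum.cong) (auto simp: a_def)
      ultimately show ?thesis by simp
    next
      case False
      then have "\<forall>e\<in>E. snd e \<noteq> c" by (auto simp: C'_def)
      then show ?thesis by simp
    qed
    have xtot: "(\<Sum>e\<in>E. x e) = 0"
    proof -
      have "(\<Sum>e\<in>E. x e) = (\<Sum>r\<in>R'. \<Sum>e\<in>{y\<in>E. fst y = r}. x e)"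
        unfolding R'_def by (rule sum.image_gen[OF fE])
      also have "\<dots> = (\<Sum>r\<in>R'. \<Sum>e\<in>E. if fst e = r then x e else 0)"
        using fE by (simp add: sum.inter_filter)
      also have "\<dots> = 0" using xrow by simp
      finally show ?thesis .
    qed
    have xcol: "(\<Sum>e\<in>E. if snd e = c then x e else 0) = 0" for c
    proof (cases "c = c0")
      case False then show ?thesis using xcol' by blast
    next
      case True
      define g where "g c = (\<Sum>e\<in>E. if snd e = c then x e else 0)" for c
      have "(\<Sum>e\<in>E. x e) = (\<Sum>c\<in>C'. \<Sum>e\<in>{y\<in>E. snd y = c}. x e)"
        unfolding C'_def by (rule sum.image_gen[OF fE])
      also have "\<dots> = (\<Sum>c\<in>C'. g c)"
        using fE by (simp add: sum.inter_filter g_def)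
      also have "\<dots> = g c0 + (\<Sum>c\<in>C' - {c0}. g c)"
        using c0 fR' by (simp add: sum.remove)
      also have "(\<Sum>c\<in>C' - {c0}. g c) = 0" using xcol' by (simp add: g_def)
      finally have "g c0 = 0" using xtot by simp
      then show ?thesis using True by (simp add: g_def)
    qed
    define D where "D r c = (if (r,c) \<in> E then x (r,c) else 0)" for r c
    have Drow: "(\<Sum>c\<in>C. D r c) = 0" for r
      unfolding D_def using sum_row_conv[OF fC ER fE, of r x] xrow[of r] by simp
    have Dcol: "(\<Sum>r\<in>R. D r c) = 0" for c
      unfolding D_def using sum_col_conv[OF fR ER fE, of c x] xcol[of c] by simp
    define S where "S = {e\<in>E. x e \<noteq> 0}"
    define \<tau> where "\<tau> e = (if x e > 0 then (of_int \<lceil>A (fst e) (snd e)\<rceil> - A (fst e) (snd e)) / x e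
                    else (A (fst e) (snd e) - of_int \<lfloor>A (fst e) (snd e)\<rfloor>) / (- x e))" for e
    have fS: "finite S" "S \<noteq> {}" using fE x1 by (auto simp: S_def)
    have taupos: "\<tau> e > 0" if "e \<in> S" for e
    proof -
      have ni: "A (fst e) (snd e) \<notin> \<int>" "x e \<noteq> 0" using that by (auto simp: S_def E_def)
      show ?thesis using not_int_floor_ceil[OF ni(1)] ni(2) by (auto simp: \<tau>_def divide_pos_neg)
    qed
    define t where "t = Min (\<tau> ` S)"
    have tle: "t \<le> \<tau> e" if "e \<in> S" for e using fS that by (simp add: t_def)
    have "t \<in> \<tau> ` S" using Min_in[of "\<tau> ` S"] fS by (simp add: t_def)
    then obtain es where es: "es \<in> S" "\<tau> es = t" by blast
    have tpos: "t > 0" using es taupos[of es] by simp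
    define A' where "A' r c = A r c + t * D r c" for r c
    have bnd: "of_int \<lfloor>A r c\<rfloor> \<le> A' r c \<and> A' r c \<le> of_int \<lceil>A r c\<rceil>" for r c
    proof (cases "(r,c) \<in> S")
      case False
      then have "D r c = 0" by (auto simp: S_def D_def)
      then show ?thesis by (simp add: A'_def le_of_int_ceiling)
    next
      case True
      have xe: "x (r,c) \<noteq> 0" "D r c = x (r,c)" using True by (auto simp: S_def D_def)
      have tl: "t \<le> \<tau> (r,c)" using tle True by blast
      show ?thesis
      proof (cases "x (r,c) > 0")
        case True
        have "t * x (r,c) \<le> \<tau> (r,c) * x (r,c)" using tl True by (simp add: mult_right_mono)
        also have "\<dots> = of_int \<lceil>A r c\<rceil> - A r c" using True by (simp add: \<tau>_def)
        finally have h: "t * x (r,c) \<le> of_int \<lceil>A r c\<rceil> - A r c" .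
        have h2: "0 < t * x (r,c)" using tpos True by simp
        have "A' r c = A r c + t * x (r,c)" by (simp add: A'_def xe)
        then show ?thesis using h h2 of_int_floor_le[of "A r c"] by linarith
      next
        case False
        then have neg: "x (r,c) < 0" using xe by simp
        have "t * (- x (r,c)) \<le> \<tau> (r,c) * (- x (r,c))" using tl neg by (simp add: mult_right_mono)
        also have "\<dots> = A r c - of_int \<lfloor>A r c\<rfloor>" using neg by (simp add: \<tau>_def)
        finally have h: "t * (- x (r,c)) \<le> A r c - of_int \<lfloor>A r c\<rfloor>" .
        have h2: "0 < t * (- x (r,c))" using tpos neg by (simp add: mult_pos_neg)
        have "A' r c = A r c - t * (- x (r,c))" by (simp add: A'_def xe)
        then show ?thesis using h h2 le_of_int_ceiling[of "A r c"] by linarith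
      qed
    qed
    have esint: "A' (fst es) (snd es) \<in> \<int>"
    proof -
      have xe: "x es \<noteq> 0" "D (fst es) (snd es) = x es" using es by (auto simp: S_def D_def)
      show ?thesis
      proof (cases "x es > 0")
        case True
        then have "t = (of_int \<lceil>A (fst es) (snd es)\<rceil> - A (fst es) (snd es)) / x es"
          using es(2) by (simp add: \<tau>_def[of es])
        then have "t * x es = of_int \<lceil>A (fst es) (snd es)\<rceil> - A (fst es) (snd es)"
          using xe by simp
        then have "A' (fst es) (snd es) = of_int \<lceil>A (fst es) (snd es)\<rceil>"
          using xe by (simp add: A'_def)
        then show ?thesis by simp
      next
        case False
        then have "t = (A (fst es) (snd es) - of_int \<lfloor>A (fst es) (snd es)\<rfloor>) / (- x es)"
          using es(2) by (simp add: \<tau>_def[of es])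
        then have "t * (- x es) = A (fst es) (snd es) - of_int \<lfloor>A (fst es) (snd es)\<rfloor>"
          using xe by simp
        then have "A' (fst es) (snd es) = of_int \<lfloor>A (fst es) (snd es)\<rfloor>"
          using xe by (simp add: A'_def)
        then show ?thesis by simp
      qed
    qed
    define E' where "E' = {e \<in> R \<times> C. A' (fst e) (snd e) \<notin> \<int>}"
    have "E' \<subseteq> E - {es}"
    proof
      fix e assume e: "e \<in> E'"
      have "e \<in> E"
      proof (rule ccontr)
        assume "e \<notin> E"
        then have "A (fst e) (snd e) \<in> \<int>" "D (fst e) (snd e) = 0" using e by (auto simp: E_def E'_def D_def)
        then have "A' (fst e) (snd e) \<in> \<int>" by (simp add: A'_def)
        then show False using e by (simp add: E'_def)
      qed
      moreover have "e \<noteq> es" using e esint by (auto simp: E'_def)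
      ultimately show "e \<in> E - {es}" by simp
    qed
    moreover have "es \<in> E" using es by (simp add: S_def)
    ultimately have "card E' < card E"
      using card_mono[of "E - {es}" E'] card_Diff1_less[OF fE, of es] fE by auto
    then have cN: "card E' < N" using less.prems(1) by (simp add: E_def)
    have A'row: "(\<Sum>c\<in>C. A' r c) = (\<Sum>c\<in>C. A r c)" for r
      using Drow[of r] by (simp add: A'_def sum.distrib sum_distrib_left[symmetric])
    have A'col: "(\<Sum>r\<in>R. A' r c) = (\<Sum>r\<in>R. A r c)" for c
      using Dcol[of c] by (simp add: A'_def sum.distrib sum_distrib_left[symmetric])
    obtain X where X1: "\<forall>r\<in>R. \<forall>c\<in>C. X r c \<in> \<int> \<and> of_int \<lfloor>A' r c\<rfloor> \<le> X r c \<and> X r c \<le> of_int \<lceil>A' r c\<rceil>"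
      and X2: "\<forall>r\<in>R. (\<Sum>c\<in>C. X r c) = (\<Sum>c\<in>C. A' r c)"
      and X3: "\<forall>c\<in>C. (\<Sum>r\<in>R. X r c) = (\<Sum>r\<in>R. A' r c)"
      using less.IH[OF cN, of A'] less.prems(2,3) A'row A'col by (auto simp: E'_def)
    have "of_int \<lfloor>A r c\<rfloor> \<le> X r c \<and> X r c \<le> of_int \<lceil>A r c\<rceil>" if "r \<in> R" "c \<in> C" for r c
    proof -
      have "\<lfloor>A r c\<rfloor> \<le> \<lfloor>A' r c\<rfloor>" using bnd[of r c] by (simp add: le_floor_iff)
      moreover have "\<lceil>A' r c\<rceil> \<le> \<lceil>A r c\<rceil>" using bnd[of r c] by (simp add: ceiling_le_iff)
      ultimately show ?thesis using X1 that
        by (meson of_int_le_iff order_trans)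
    qed
    then show ?thesis using X1 X2 X3 A'row A'col by (intro exI[of _ X]) auto
  qed
qed

lemma fc_close:
  fixes y z :: real
  assumes "of_int \<lfloor>y\<rfloor> \<le> z" "z \<le> of_int \<lceil>y\<rceil>"
  shows "\<bar>y - z\<bar> < 1"
  using assms floor_correct[of y] ceiling_correct[of y] by (simp add: abs_less_iff) linarith

lemma sum_0n: "(\<Sum>v\<in>{0..(n::nat)}. f v) = f 0 + (\<Sum>v=1..n. (f v :: real))"
  using sum.atLeast_Suc_atMost[of 0 n f] by simp

lemma round_gen:
  fixes A :: "nat \<Rightarrow> nat \<Rightarrow> real" and n :: nat
  shows "\<exists>X. (\<forall>u\<in>{1..n}. \<forall>v\<in>{1..n}. X u v \<in> \<int> \<and> of_int \<lfloor>A u v\<rfloor> \<le> X u v \<and> X u v \<le> of_int \<lceil>A u v\<rceil>) \<and>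
     (\<forall>u\<in>{1..n}. \<bar>(\<Sum>v=1..n. X u v) - (\<Sum>v=1..n. A u v)\<bar> < 1) \<and>
     (\<forall>v\<in>{1..n}. \<bar>(\<Sum>u=1..n. X u v) - (\<Sum>u=1..n. A u v)\<bar> < 1)"
proof -
  define r where "r u = (\<Sum>v=1..n. A u v)" for u
  define c where "c v = (\<Sum>u=1..n. A u v)" for v
  define T where "T = (\<Sum>u=1..n. of_int \<lceil>r u\<rceil> - r u)"
  define A' where "A' u v = (if u = 0 \<and> v = 0 then of_int \<lceil>T\<rceil> - T
      else if u = 0 then of_int \<lceil>c v\<rceil> - c v else if v = 0 then of_int \<lceil>r u\<rceil> - r u else A u v)" for u v
  have rc: "(\<Sum>u=1..n. r u) = (\<Sum>v=1..n. c v)"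
    unfolding r_def c_def by (rule sum.swap)
  have rowint: "(\<Sum>v\<in>{0..n}. A' u v) \<in> \<int>" if "u \<in> {0..n}" for u
  proof (cases "u = 0")
    case True
    have "(\<Sum>v\<in>{0..n}. A' u v) = (of_int \<lceil>T\<rceil> - T) + (\<Sum>v=1..n. of_int \<lceil>c v\<rceil> - c v)"
      using True by (simp add: sum_0n A'_def)
    also have "\<dots> = of_int \<lceil>T\<rceil> - (\<Sum>u=1..n. of_int \<lceil>r u\<rceil>) + (\<Sum>v=1..n. of_int \<lceil>c v\<rceil>)"
      using rc by (simp add: T_def sum_subtractf)
    also have "\<dots> \<in> \<int>" by (intro Ints_add Ints_diff Ints_sum) auto
    finally show ?thesis .
  next
    case False
    have "(\<Sum>v\<in>{0..n}. A' u v) = (of_int \<lceil>r u\<rceil> - r u) + (\<Sum>v=1..n. A u v)"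
      using False by (simp add: sum_0n A'_def)
    also have "\<dots> = of_int \<lceil>r u\<rceil>" by (simp add: r_def)
    finally show ?thesis by simp
  qed
  have colint: "(\<Sum>u\<in>{0..n}. A' u v) \<in> \<int>" if "v \<in> {0..n}" for v
  proof (cases "v = 0")
    case True
    have "(\<Sum>u\<in>{0..n}. A' u v) = (of_int \<lceil>T\<rceil> - T) + (\<Sum>u=1..n. of_int \<lceil>r u\<rceil> - r u)"
      using True by (simp add: sum_0n A'_def)
    also have "\<dots> = of_int \<lceil>T\<rceil>" by (simp add: T_def)
    finally show ?thesis by simp
  next
    case False
    have "(\<Sum>u\<in>{0..n}. A' u v) = (of_int \<lceil>c v\<rceil> - c v) + (\<Sum>u=1..n. A u v)"
      using False by (simp add: sum_0n A'_def)
    also have "\<dots> = of_int \<lceil>c v\<rceil>" by (simp add: c_def)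
    finally show ?thesis by simp
  qed
  obtain X where X1: "\<forall>u\<in>{0..n}. \<forall>v\<in>{0..n}. X u v \<in> \<int> \<and> of_int \<lfloor>A' u v\<rfloor> \<le> X u v \<and> X u v \<le> of_int \<lceil>A' u v\<rceil>"
    and X2: "\<forall>u\<in>{0..n}. (\<Sum>v\<in>{0..n}. X u v) = (\<Sum>v\<in>{0..n}. A' u v)"
    and X3: "\<forall>v\<in>{0..n}. (\<Sum>u\<in>{0..n}. X u v) = (\<Sum>u\<in>{0..n}. A' u v)"
    using round_int[where R="{0..n}" and C="{0..n}" and A=A'] rowint colint by auto
  have X1': "X u v \<in> \<int> \<and> of_int \<lfloor>A' u v\<rfloor> \<le> X u v \<and> X u v \<le> of_int \<lceil>A' u v\<rceil>"
    if "u \<le> n" "v \<le> n" for u v using X1 that by simp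
  have h1: "X u v \<in> \<int> \<and> of_int \<lfloor>A u v\<rfloor> \<le> X u v \<and> X u v \<le> of_int \<lceil>A u v\<rceil>"
    if uv: "u \<in> {1..n}" "v \<in> {1..n}" for u v
  proof -
    have "A' u v = A u v" using uv by (simp add: A'_def)
    then show ?thesis using X1'[of u v] uv by simp
  qed
  have h2: "\<bar>(\<Sum>v=1..n. X u v) - (\<Sum>v=1..n. A u v)\<bar> < 1" if u: "u \<in> {1..n}" for u
  proof -
    have "(\<Sum>v\<in>{0..n}. X u v) = (\<Sum>v\<in>{0..n}. A' u v)" using X2 u by auto
    then have e: "X u 0 + (\<Sum>v=1..n. X u v) = (of_int \<lceil>r u\<rceil> - r u) + (\<Sum>v=1..n. A u v)"
      using u by (simp add: sum_0n A'_def)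
    have "of_int \<lfloor>A' u 0\<rfloor> \<le> X u 0 \<and> X u 0 \<le> of_int \<lceil>A' u 0\<rceil>" using X1'[of u 0] u by simp
    then have "\<bar>(of_int \<lceil>r u\<rceil> - r u) - X u 0\<bar> < 1" using u by (intro fc_close) (auto simp: A'_def)
    then show ?thesis using e by (simp add: r_def)
  qed
  have h3: "\<bar>(\<Sum>u=1..n. X u v) - (\<Sum>u=1..n. A u v)\<bar> < 1" if v: "v \<in> {1..n}" for v
  proof -
    have "(\<Sum>u\<in>{0..n}. X u v) = (\<Sum>u\<in>{0..n}. A' u v)" using X3 v by auto
    then have e: "X 0 v + (\<Sum>u=1..n. X u v) = (of_int \<lceil>c v\<rceil> - c v) + (\<Sum>u=1..n. A u v)"
      using v by (simp add: sum_0n A'_def)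
    have "of_int \<lfloor>A' 0 v\<rfloor> \<le> X 0 v \<and> X 0 v \<le> of_int \<lceil>A' 0 v\<rceil>" using X1'[of 0 v] v by simp
    then have "\<bar>(of_int \<lceil>c v\<rceil> - c v) - X 0 v\<bar> < 1" using v by (intro fc_close) (auto simp: A'_def)
    then show ?thesis using e by (simp add: c_def)
  qed
  show ?thesis using h1 h2 h3 by blast
qed

definition alp :: real where "alp = 99/125"
definition Vf :: "real \<Rightarrow> real" where "Vf x = 49/100 + 26/125 * (x - 5/4)"
definition cls :: "real \<Rightarrow> nat" where
  "cls x = (if of_int \<lceil>alp * x\<rceil> \<le> x then 0 else nat \<lceil>100 * (x - of_int \<lfloor>x\<rfloor>)\<rceil>)"
definition wt :: "nat \<Rightarrow> real" where "wt c = (if c = 0 then 1 else real c / 100)"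

lemma quad_pos:
  fixes A B C x :: real
  assumes "A > 0" "4*A*C - B^2 > 0"
  shows "A*x^2 + B*x + C > 0"
proof -
  have "A*x^2 + B*x + C = A*(x + B/(2*A))^2 + (4*A*C - B^2)/(4*A)"
    using assms(1) by (simp add: field_simps power2_eq_square)
  moreover have "A*(x + B/(2*A))^2 \<ge> 0" using assms(1) by simp
  moreover have "(4*A*C - B^2)/(4*A) > 0" using assms by simp
  ultimately show ?thesis by linarith
qed

lemma key_k:
  fixes x :: real and k :: int
  assumes "k \<in> {0,1,2,3}"
  shows "(x - of_int k + 1/100) * (of_int k + 1 - alp * x) \<le> Vf x"
proof -
  have "Vf x - (x - of_int k + 1/100) * (of_int k + 1 - alp * x) =
        alp*x^2 + (26/125 - (of_int k+1) + alp*(1/100 - of_int k))*x + (49/100 - 26/125*5/4 - (1/100 - of_int k)*(of_int k+1))"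
    unfolding Vf_def power2_eq_square by (simp add: field_simps)
  moreover have "alp*x^2 + (26/125 - (of_int k+1) + alp*(1/100 - of_int k))*x + (49/100 - 26/125*5/4 - (1/100 - of_int k)*(of_int k+1)) > 0"
  proof (rule quad_pos)
    show "alp > 0" by (simp add: alp_def)
    show "4 * alp * (49/100 - 26/125*5/4 - (1/100 - of_int k)*(of_int k+1)) - (26/125 - (of_int k+1) + alp*(1/100 - of_int k))^2 > 0"
      using assms by (auto simp: alp_def power2_eq_square)
  qed
  ultimately show ?thesis by linarith
qed

lemma cls_le: "cls x \<le> 100"
proof (cases "of_int \<lceil>alp * x\<rceil> \<le> x")
  case True then show ?thesis by (simp add: cls_def)
next
  case False
  have "x - of_int \<lfloor>x\<rfloor> < 1" by linarith
  then have "100 * (x - of_int \<lfloor>x\<rfloor>) \<le> 100" by simp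
  then have "\<lceil>100 * (x - of_int \<lfloor>x\<rfloor>)\<rceil> \<le> 100" by (simp add: ceiling_le_iff)
  then show ?thesis using False by (simp add: cls_def nat_le_iff)
qed

lemma wt_bounds: "c \<le> 100 \<Longrightarrow> 0 \<le> wt c \<and> wt c \<le> 1"
  by (simp add: wt_def)

lemma entry_bound:
  fixes x X :: real
  assumes x0: "0 \<le> x" and XI: "X \<in> \<int>" and lo: "of_int \<lfloor>alp * x\<rfloor> \<le> X" and hi: "X \<le> of_int \<lceil>alp * x\<rceil>"
  shows "max 0 (x - X) \<le> Vf x + wt (cls x) * (alp * x - X)"
proof (cases "of_int \<lceil>alp * x\<rceil> \<le> x")
  case True
  then have "x - X \<ge> 0" using hi by linarith
  moreover have "x - alp * x \<le> Vf x" unfolding alp_def Vf_def by (simp add: field_simps)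
  ultimately show ?thesis using True by (simp add: cls_def wt_def)
next
  case False
  define y where "y = alp * x"
  define k where "k = \<lfloor>y\<rfloor>"
  have yx: "y \<le> x" using x0 by (simp add: y_def alp_def)
  have yni: "y \<notin> \<int>"
  proof
    assume "y \<in> \<int>"
    then obtain z where "y = of_int z" by (auto elim: Ints_cases)
    then have "of_int \<lceil>y\<rceil> = y" by simp
    then show False using False yx unfolding y_def by linarith
  qed
  have ky: "of_int k < y" "y < of_int k + 1" using yni k_def
    by (metis Ints_of_int floor_correct less_eq_real_def of_int_1 of_int_add) (simp add: k_def)
  have ceil: "\<lceil>y\<rceil> = k + 1" using ky by (simp add: ceiling_eq_iff)
  have xk: "x < of_int k + 1" using False ceil by (simp add: y_def)
  have fx: "\<lfloor>x\<rfloor> = k" using ky yx xk by (simp add: floor_eq_iff)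
  define f where "f = x - of_int k"
  have f01: "0 < f" "f < 1" using ky yx xk by (auto simp: f_def)
  define j where "j = \<lceil>100 * f\<rceil>"
  have j1: "100 * f \<le> of_int j" "of_int j < 100 * f + 1" unfolding j_def
    using ceiling_correct[of "100*f"] by linarith+
  have jpos: "j \<ge> 1" using j1 f01 by (smt (verit) of_int_le_0_iff)
  have clsx: "cls x = nat j" using False fx by (simp add: cls_def j_def f_def y_def)
  have wtx: "wt (cls x) = of_int j / 100" using jpos clsx by (simp add: wt_def)
  have w1: "f \<le> wt (cls x)" "wt (cls x) < f + 1/100" using j1 wtx by auto
  have k03: "k \<in> {0,1,2,3}"
  proof -
    have "0 \<le> k" using ky x0 by (simp add: k_def y_def alp_def)
    moreover have "alp * x < alp * (of_int k + 1)" using xk by (simp add: alp_def)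
    then have "of_int k < alp * (of_int k + 1)" using ky(1) unfolding y_def by linarith
    then have "k < 4" by (simp add: alp_def) 
    ultimately show ?thesis by auto
  qed
  have pos: "of_int k + 1 - y > 0" using ky by simp
  have key: "wt (cls x) * (of_int k + 1 - y) \<le> Vf x"
  proof -
    have "wt (cls x) * (of_int k + 1 - y) \<le> (f + 1/100) * (of_int k + 1 - y)"
      using w1 pos by (intro mult_right_mono) auto
    also have "\<dots> \<le> Vf x" using key_k[OF k03, of x] by (simp add: f_def y_def)
    finally show ?thesis .
  qed
  have XX: "X = of_int k \<or> X = of_int k + 1"
  proof -
    obtain z where z: "X = of_int z" using XI by (auto elim: Ints_cases)
    have "k \<le> z" "z \<le> k + 1" using lo hi ceil z by (auto simp: k_def y_def)
    then have "z = k \<or> z = k + 1" by auto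
    then show ?thesis using z by auto
  qed
  show ?thesis
  proof (cases "X = of_int k + 1")
    case True
    have "max 0 (x - X) = 0" using True xk by simp
    then show ?thesis using key True by (simp add: y_def algebra_simps)
  next
    case False
    then have Xk: "X = of_int k" using XX by simp
    have "max 0 (x - X) = f" using Xk f01 by (simp add: f_def)
    moreover have "wt (cls x) * (of_int k + 1 - y) + wt (cls x) * (y - of_int k) = wt (cls x)"
      by (simp add: algebra_simps)
    ultimately show ?thesis using key w1 Xk by (simp add: y_def)
  qed
qed

lemma wt_mul_le: "c \<le> 100 \<Longrightarrow> d < 1 \<Longrightarrow> wt c * d \<le> 1"
proof -
  assume c: "c \<le> 100" and d: "d < 1"
  have w: "0 \<le> wt c" "wt c \<le> 1" using wt_bounds[OF c] by auto
  show ?thesis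
  proof (cases "d \<le> 0")
    case True then show ?thesis using w by (smt (verit) mult_nonneg_nonpos)
  next
    case False
    then have "wt c * d \<le> 1 * d" using w by (intro mult_right_mono) auto
    then show ?thesis using d by simp
  qed
qed

lemma class_round:
  fixes x :: "nat \<Rightarrow> nat \<Rightarrow> real" and n :: nat
  assumes x0: "\<forall>u\<in>{1..n}. \<forall>v\<in>{1..n}. 0 \<le> x u v"
  shows "\<exists>X::nat\<Rightarrow>nat\<Rightarrow>real. (\<forall>u\<in>{1..n}. \<forall>v\<in>{1..n}. X u v \<in> \<int> \<and> of_int \<lfloor>alp * x u v\<rfloor> \<le> X u v \<and> X u v \<le> of_int \<lceil>alp * x u v\<rceil>) \<and>
     (\<forall>u\<in>{1..n}. (\<Sum>v=1..n. X u v) < alp * (\<Sum>v=1..n. x u v) + 101) \<and>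
     (\<forall>v\<in>{1..n}. (\<Sum>u=1..n. X u v) < alp * (\<Sum>u=1..n. x u v) + 101) \<and>
     (\<forall>u\<in>{1..n}. (\<Sum>v=1..n. max 0 (x u v - X u v)) \<le> (\<Sum>v=1..n. Vf (x u v)) + 101) \<and>
     (\<forall>v\<in>{1..n}. (\<Sum>u=1..n. max 0 (x u v - X u v)) \<le> (\<Sum>u=1..n. Vf (x u v)) + 101)"
proof -
  define A where "A c u v = (if cls (x u v) = c then alp * x u v else 0)" for c u v
  have "\<forall>c. \<exists>Y. (\<forall>u\<in>{1..n}. \<forall>v\<in>{1..n}. Y u v \<in> \<int> \<and> of_int \<lfloor>A c u v\<rfloor> \<le> Y u v \<and> Y u v \<le> of_int \<lceil>A c u v\<rceil>) \<and>
     (\<forall>u\<in>{1..n}. \<bar>(\<Sum>v=1..n. Y u v) - (\<Sum>v=1..n. A c u v)\<bar> < 1) \<and>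
     (\<forall>v\<in>{1..n}. \<bar>(\<Sum>u=1..n. Y u v) - (\<Sum>u=1..n. A c u v)\<bar> < 1)"
    using round_gen by blast
  then obtain Xs where Xs1: "\<And>c. \<forall>u\<in>{1..n}. \<forall>v\<in>{1..n}. Xs c u v \<in> \<int> \<and> of_int \<lfloor>A c u v\<rfloor> \<le> Xs c u v \<and> Xs c u v \<le> of_int \<lceil>A c u v\<rceil>"
    and Xs2: "\<And>c. \<forall>u\<in>{1..n}. \<bar>(\<Sum>v=1..n. Xs c u v) - (\<Sum>v=1..n. A c u v)\<bar> < 1"
    and Xs3: "\<And>c. \<forall>v\<in>{1..n}. \<bar>(\<Sum>u=1..n. Xs c u v) - (\<Sum>u=1..n. A c u v)\<bar> < 1"
    by metis
  have Xs1': "Xs c u v \<in> \<int> \<and> of_int \<lfloor>A c u v\<rfloor> \<le> Xs c u v \<and> Xs c u v \<le> of_int \<lceil>A c u v\<rceil>"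
    if "u \<in> {1..n}" "v \<in> {1..n}" for c u v using Xs1[of c] that by blast
  have Xs2': "\<bar>(\<Sum>v=1..n. Xs c u v) - (\<Sum>v=1..n. A c u v)\<bar> < 1" if "u \<in> {1..n}" for c u
    using Xs2[of c] that by blast
  have Xs3': "\<bar>(\<Sum>u=1..n. Xs c u v) - (\<Sum>u=1..n. A c u v)\<bar> < 1" if "v \<in> {1..n}" for c v
    using Xs3[of c] that by blast
  define X where "X u v = Xs (cls (x u v)) u v" for u v
  define K where "K = {0..(100::nat)}"
  have fK: "finite K" "K \<noteq> {}" "card K = 101" by (auto simp: K_def)
  have clsK: "cls y \<in> K" for y using cls_le[of y] by (simp add: K_def)
  have Xs0: "Xs c u v = 0" if "u \<in> {1..n}" "v \<in> {1..n}" "c \<noteq> cls (x u v)" for c u v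
  proof -
    have "A c u v = 0" using that by (simp add: A_def)
    then show ?thesis using Xs1'[of u v c] that by simp
  qed
  have XP: "X u v \<in> \<int> \<and> of_int \<lfloor>alp * x u v\<rfloor> \<le> X u v \<and> X u v \<le> of_int \<lceil>alp * x u v\<rceil>"
    if "u \<in> {1..n}" "v \<in> {1..n}" for u v
    using Xs1'[of u v "cls (x u v)"] that by (simp add: X_def A_def)
  have sumXs: "(\<Sum>c\<in>K. Xs c u v) = X u v" if "u \<in> {1..n}" "v \<in> {1..n}" for u v
  proof -
    have "(\<Sum>c\<in>K. Xs c u v) = (\<Sum>c\<in>K. if c = cls (x u v) then X u v else 0)"
      by (rule sum.cong) (use Xs0 that in \<open>auto simp: X_def\<close>)
    then show ?thesis using clsK fK by (simp add: sum.delta')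
  qed
  have sumA: "(\<Sum>c\<in>K. A c u v) = alp * x u v" for u v
  proof -
    have "(\<Sum>c\<in>K. A c u v) = (\<Sum>c\<in>K. if c = cls (x u v) then alp * x u v else 0)"
      by (rule sum.cong) (auto simp: A_def)
    then show ?thesis using clsK fK by (simp add: sum.delta')
  qed
  have sumW: "(\<Sum>c\<in>K. wt c * (A c u v - Xs c u v)) = wt (cls (x u v)) * (alp * x u v - X u v)"
    if "u \<in> {1..n}" "v \<in> {1..n}" for u v
  proof -
    have "(\<Sum>c\<in>K. wt c * (A c u v - Xs c u v)) = (\<Sum>c\<in>K. if c = cls (x u v) then wt (cls (x u v)) * (alp * x u v - X u v) else 0)"
      by (rule sum.cong) (use Xs0 that in \<open>auto simp: X_def A_def\<close>)
    then show ?thesis using clsK fK by (simp add: sum.delta')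
  qed
  have row1: "(\<Sum>v=1..n. X u v) < alp * (\<Sum>v=1..n. x u v) + 101" if u: "u \<in> {1..n}" for u
  proof -
    have "(\<Sum>v=1..n. X u v) = (\<Sum>v=1..n. \<Sum>c\<in>K. Xs c u v)" using sumXs u by simp
    also have "\<dots> = (\<Sum>c\<in>K. \<Sum>v=1..n. Xs c u v)" by (rule sum.swap)
    also have "\<dots> < (\<Sum>c\<in>K. (\<Sum>v=1..n. A c u v) + 1)"
    proof (rule sum_strict_mono[OF fK(1) fK(2)])
      fix c assume "c \<in> K"
      show "(\<Sum>v=1..n. Xs c u v) < (\<Sum>v=1..n. A c u v) + 1" using Xs2'[OF u, of c] by (simp add: abs_less_iff)
    qed
    also have "\<dots> = (\<Sum>v=1..n. \<Sum>c\<in>K. A c u v) + 101" using fK by (simp add: sum.distrib sum.swap[of _ K])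
    also have "\<dots> = alp * (\<Sum>v=1..n. x u v) + 101" by (simp add: sumA sum_distrib_left)
    finally show ?thesis .
  qed
  have col1: "(\<Sum>u=1..n. X u v) < alp * (\<Sum>u=1..n. x u v) + 101" if v: "v \<in> {1..n}" for v
  proof -
    have "(\<Sum>u=1..n. X u v) = (\<Sum>u=1..n. \<Sum>c\<in>K. Xs c u v)" using sumXs v by simp
    also have "\<dots> = (\<Sum>c\<in>K. \<Sum>u=1..n. Xs c u v)" by (rule sum.swap)
    also have "\<dots> < (\<Sum>c\<in>K. (\<Sum>u=1..n. A c u v) + 1)"
    proof (rule sum_strict_mono[OF fK(1) fK(2)])
      fix c assume "c \<in> K"
      show "(\<Sum>u=1..n. Xs c u v) < (\<Sum>u=1..n. A c u v) + 1" using Xs3'[OF v, of c] by (simp add: abs_less_iff)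
    qed
    also have "\<dots> = (\<Sum>u=1..n. \<Sum>c\<in>K. A c u v) + 101" using fK by (simp add: sum.distrib sum.swap[of _ K])
    also have "\<dots> = alp * (\<Sum>u=1..n. x u v) + 101" by (simp add: sumA sum_distrib_left)
    finally show ?thesis .
  qed
  have eb: "max 0 (x u v - X u v) \<le> Vf (x u v) + wt (cls (x u v)) * (alp * x u v - X u v)"
    if "u \<in> {1..n}" "v \<in> {1..n}" for u v
    using entry_bound[of "x u v" "X u v"] XP[OF that] x0 that by auto
  have row2: "(\<Sum>v=1..n. max 0 (x u v - X u v)) \<le> (\<Sum>v=1..n. Vf (x u v)) + 101" if u: "u \<in> {1..n}" for u
  proof -
    have "(\<Sum>v=1..n. max 0 (x u v - X u v)) \<le> (\<Sum>v=1..n. Vf (x u v) + wt (cls (x u v)) * (alp * x u v - X u v))"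
      by (rule sum_mono) (use eb u in auto)
    also have "\<dots> = (\<Sum>v=1..n. Vf (x u v)) + (\<Sum>v=1..n. \<Sum>c\<in>K. wt c * (A c u v - Xs c u v))"
      using sumW u by (simp add: sum.distrib)
    also have "(\<Sum>v=1..n. \<Sum>c\<in>K. wt c * (A c u v - Xs c u v)) = (\<Sum>c\<in>K. wt c * ((\<Sum>v=1..n. A c u v) - (\<Sum>v=1..n. Xs c u v)))"
      by (subst sum.swap) (rule sum.cong, simp, simp add: sum_subtractf[symmetric] sum_distrib_left)
    also have "\<dots> \<le> (\<Sum>c\<in>K. 1)"
    proof (rule sum_mono)
      fix c assume "c \<in> K"
      then show "wt c * ((\<Sum>v=1..n. A c u v) - (\<Sum>v=1..n. Xs c u v)) \<le> 1"
        using Xs2'[OF u, of c] by (intro wt_mul_le) (auto simp: K_def abs_less_iff)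
    qed
    finally show ?thesis using fK by simp
  qed
  have col2: "(\<Sum>u=1..n. max 0 (x u v - X u v)) \<le> (\<Sum>u=1..n. Vf (x u v)) + 101" if v: "v \<in> {1..n}" for v
  proof -
    have "(\<Sum>u=1..n. max 0 (x u v - X u v)) \<le> (\<Sum>u=1..n. Vf (x u v) + wt (cls (x u v)) * (alp * x u v - X u v))"
      by (rule sum_mono) (use eb v in auto)
    also have "\<dots> = (\<Sum>u=1..n. Vf (x u v)) + (\<Sum>u=1..n. \<Sum>c\<in>K. wt c * (A c u v - Xs c u v))"
      using sumW v by (simp add: sum.distrib)
    also have "(\<Sum>u=1..n. \<Sum>c\<in>K. wt c * (A c u v - Xs c u v)) = (\<Sum>c\<in>K. wt c * ((\<Sum>u=1..n. A c u v) - (\<Sum>u=1..n. Xs c u v)))"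
      by (subst sum.swap) (rule sum.cong, simp, simp add: sum_subtractf[symmetric] sum_distrib_left)
    also have "\<dots> \<le> (\<Sum>c\<in>K. 1)"
    proof (rule sum_mono)
      fix c assume "c \<in> K"
      then show "wt c * ((\<Sum>u=1..n. A c u v) - (\<Sum>u=1..n. Xs c u v)) \<le> 1"
        using Xs3'[OF v, of c] by (intro wt_mul_le) (auto simp: K_def abs_less_iff)
    qed
    finally show ?thesis using fK by simp
  qed
  show ?thesis using XP row1 col1 row2 col2 by (intro exI[of _ X]) blast
qed

lemma sum_upd_dec:
  fixes a :: "nat \<Rightarrow> nat"
  assumes "finite I" "u0 \<in> I" "a u0 > 0"
  shows "(\<Sum>u\<in>I. (a(u0 := a u0 - 1)) u) + 1 = (\<Sum>u\<in>I. a u)"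
proof -
  have "(\<Sum>u\<in>I. (a(u0 := a u0 - 1)) u) = (a u0 - 1) + (\<Sum>u\<in>I - {u0}. a u)"
    using assms by (simp add: sum.remove)
  moreover have "(\<Sum>u\<in>I. a u) = a u0 + (\<Sum>u\<in>I - {u0}. a u)"
    using assms by (simp add: sum.remove)
  ultimately show ?thesis using assms by simp
qed

lemma complete_margins:
  fixes a b :: "nat \<Rightarrow> nat"
  assumes "finite I" "finite J"
  shows "(\<Sum>u\<in>I. a u) = s \<Longrightarrow> (\<Sum>v\<in>J. b v) = s \<Longrightarrow>
    \<exists>P. (\<forall>u\<in>I. (\<Sum>v\<in>J. P u v) = a u) \<and> (\<forall>v\<in>J. (\<Sum>u\<in>I. P u v) = b v)"
proof (induction s arbitrary: a b)
  case 0
  then have "\<forall>u\<in>I. a u = 0" "\<forall>v\<in>J. b v = 0" using assms by auto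
  then show ?case by (intro exI[of _ "\<lambda>u v. 0"]) simp
next
  case (Suc s)
  obtain u0 where u0: "u0 \<in> I" "a u0 > 0"
    using Suc.prems(1) by (metis Zero_not_Suc gr0I sum.neutral)
  obtain v0 where v0: "v0 \<in> J" "b v0 > 0"
    using Suc.prems(2) by (metis Zero_not_Suc gr0I sum.neutral)
  define a' where "a' = a(u0 := a u0 - 1)"
  define b' where "b' = b(v0 := b v0 - 1)"
  have "(\<Sum>u\<in>I. a' u) = s" using sum_upd_dec[of I u0 a] assms(1) u0 Suc.prems(1) by (simp add: a'_def)
  moreover have "(\<Sum>v\<in>J. b' v) = s" using sum_upd_dec[of J v0 b] assms(2) v0 Suc.prems(2) by (simp add: b'_def)
  ultimately obtain P where P1: "\<forall>u\<in>I. (\<Sum>v\<in>J. P u v) = a' u" and P2: "\<forall>v\<in>J. (\<Sum>u\<in>I. P u v) = b' v"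
    using Suc.IH by blast
  define P' where "P' u v = P u v + (if u = u0 \<and> v = v0 then 1 else 0)" for u v
  have "(\<Sum>v\<in>J. P' u v) = a u" if "u \<in> I" for u
  proof -
    have "(\<Sum>v\<in>J. P' u v) = (\<Sum>v\<in>J. P u v) + (\<Sum>v\<in>J. if u = u0 \<and> v = v0 then 1 else 0)"
      by (simp add: P'_def sum.distrib)
    also have "(\<Sum>v\<in>J. if u = u0 \<and> v = v0 then 1 else (0::nat)) = (if u = u0 then 1 else 0)"
      using v0 assms(2) by (simp add: sum.delta)
    finally show ?thesis using P1 that u0 by (auto simp: a'_def)
  qed
  moreover have "(\<Sum>u\<in>I. P' u v) = b v" if "v \<in> J" for v
  proof -
    have "(\<Sum>u\<in>I. P' u v) = (\<Sum>u\<in>I. P u v) + (\<Sum>u\<in>I. if u = u0 \<and> v = v0 then 1 else 0)"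
      by (simp add: P'_def sum.distrib)
    also have "(\<Sum>u\<in>I. if u = u0 \<and> v = v0 then 1 else (0::nat)) = (if v = v0 then 1 else 0)"
      using u0 assms(1) by (simp add: sum.delta)
    finally show ?thesis using P2 that v0 by (auto simp: b'_def)
  qed
  ultimately show ?case by blast
qed

datatype pd = Dir nat nat nat | Val nat nat nat

fun pth :: "pd \<Rightarrow> arc list" where
  "pth (Dir u v i) = [(u, v, i)]"
| "pth (Val u v w) = [(u, w, 0), (w, v, 0)]"

lemma sum_bij_filter:
  fixes g :: "'a \<Rightarrow> real"
  assumes "bij_betw f {0..<(K::nat)} S"
  shows "(\<Sum>k\<in>{k. k < K \<and> Q (f k)}. g (f k)) = (\<Sum>s\<in>{s\<in>S. Q s}. g s)"
proof -
  have "inj_on f {0..<K}" using assms by (simp add: bij_betw_def)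
  then have inj: "inj_on f {k. k < K \<and> Q (f k)}" by (rule inj_on_subset) auto
  have img: "f ` {k. k < K \<and> Q (f k)} = {s\<in>S. Q s}"
  proof
    show "f ` {k. k < K \<and> Q (f k)} \<subseteq> {s\<in>S. Q s}" using assms by (auto simp: bij_betw_def)
    show "{s\<in>S. Q s} \<subseteq> f ` {k. k < K \<and> Q (f k)}"
    proof
      fix s assume s: "s \<in> {s\<in>S. Q s}"
      then obtain k where "k \<in> {0..<K}" "s = f k" using assms by (auto simp: bij_betw_def)
      then show "s \<in> f ` {k. k < K \<and> Q (f k)}" using s by auto
    qed
  qed
  show ?thesis using sum.reindex[OF inj, of g] img by simp
qed

lemma hosting:
  fixes x :: "nat \<Rightarrow> nat \<Rightarrow> real" and X mult :: "nat \<Rightarrow> nat \<Rightarrow> nat" and n :: nat and L :: real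
  defines "\<rho> \<equiv> (\<lambda>u v. max 0 (x u v - real (X u v)))"
  assumes n1: "n \<ge> 1"
    and x0: "\<forall>u\<in>{1..n}. \<forall>v\<in>{1..n}. 0 \<le> x u v"
    and Xm: "\<forall>u\<in>{1..n}. \<forall>v\<in>{1..n}. X u v < mult u v"
    and rowL: "\<forall>u\<in>{1..n}. (\<Sum>v=1..n. \<rho> u v) \<le> L"
    and colL: "\<forall>v\<in>{1..n}. (\<Sum>u=1..n. \<rho> u v) \<le> L"
    and Ln: "2 * L \<le> real n"
  shows "hosts n mult (\<lambda>u v. x u v / real (2 * n - 1))"
proof -
  define c where "c = 1 / real (2 * n - 1)"
  have cpos: "c > 0" using n1 by (simp add: c_def)
  define wgt where "wgt s = (case s of Dir u v i \<Rightarrow> c * min (x u v) (real (X u v)) / real (X u v)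
                                  | Val u v w \<Rightarrow> c * \<rho> u v / real n)" for s
  define Sd where "Sd = (\<lambda>(u, v, i). Dir u v i) ` (SIGMA u:{1..n}. SIGMA v:{1..n}. {1..X u v})"
  define Sv where "Sv = (\<lambda>(u, v, w). Val u v w) ` ({1..n} \<times> {1..n} \<times> {1..n})"
  define S where "S = Sd \<union> Sv"
  have memD: "Dir u v i \<in> Sd \<longleftrightarrow> u \<in> {1..n} \<and> v \<in> {1..n} \<and> 1 \<le> i \<and> i \<le> X u v" for u v i
  proof
    assume "u \<in> {1..n} \<and> v \<in> {1..n} \<and> 1 \<le> i \<and> i \<le> X u v"
    then show "Dir u v i \<in> Sd" unfolding Sd_def by (intro rev_image_eqI[of "(u,v,i)"]) auto
  qed (auto simp: Sd_def)
  have memV: "Val u v w \<in> Sv \<longleftrightarrow> u \<in> {1..n} \<and> v \<in> {1..n} \<and> w \<in> {1..n}" for u v w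
  proof
    assume "u \<in> {1..n} \<and> v \<in> {1..n} \<and> w \<in> {1..n}"
    then show "Val u v w \<in> Sv" unfolding Sv_def by (intro rev_image_eqI[of "(u,v,w)"]) auto
  qed (auto simp: Sv_def)
  have nD: "Val u v w \<notin> Sd" for u v w by (auto simp: Sd_def)
  have nV: "Dir u v w \<notin> Sv" for u v w by (auto simp: Sv_def)
  have Xm': "X u v < mult u v" if "u \<in> {1..n}" "v \<in> {1..n}" for u v using Xm that by blast
  have fS: "finite S" unfolding S_def Sd_def Sv_def by auto
  obtain f where f: "bij_betw f {0..<card S} S" using ex_bij_betw_nat_finite[OF fS] by blast
  define K where "K = card S"
  have inS: "f k \<in> S" if "k < K" for k using f that by (auto simp: K_def bij_betw_def)
  have wgt0: "wgt s \<ge> 0" if "s \<in> S" for s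
    using that x0 cpos unfolding S_def Sd_def Sv_def wgt_def \<rho>_def by auto
  have isp: "is_path n mult (pth s)" if "s \<in> S" for s
  proof -
    have arc0: "(u, v, 0) \<in> arcs n mult" if "u \<in> {1..n}" "v \<in> {1..n}" for u v
      using Xm'[OF that] that by (auto simp: arcs_def)
    show ?thesis
    proof (cases "s \<in> Sd")
      case True
      then obtain u v i where s: "s = Dir u v i" "u \<in> {1..n}" "v \<in> {1..n}" "1 \<le> i" "i \<le> X u v"
        unfolding Sd_def by auto
      have "i < mult u v" using Xm'[OF s(2,3)] s by linarith
      then show ?thesis using s by (auto simp: is_path_def arcs_def)
    next
      case False
      then have "s \<in> Sv" using that by (simp add: S_def)
      then obtain u v w where s: "s = Val u v w" "u \<in> {1..n}" "v \<in> {1..n}" "w \<in> {1..n}"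
        unfolding Sv_def by auto
      have "\<forall>k. Suc k < 2 \<longrightarrow> k = 0" by auto
      then show ?thesis using s arc0 by (auto simp: is_path_def arc_head_def arc_tail_def)
    qed
  qed
  have demand: "(\<Sum>s\<in>{s\<in>S. path_src (pth s) = u \<and> path_tgt (pth s) = v}. wgt s) = x u v / real (2 * n - 1)"
    if uv: "u \<in> {1..n}" "v \<in> {1..n}" for u v
  proof -
    have seteq: "{s\<in>S. path_src (pth s) = u \<and> path_tgt (pth s) = v} =
        (\<lambda>i. Dir u v i) ` {1..X u v} \<union> (\<lambda>w. Val u v w) ` {1..n}"
    proof (rule set_eqI)
      fix s show "s \<in> {s\<in>S. path_src (pth s) = u \<and> path_tgt (pth s) = v} \<longleftrightarrow>
          s \<in> (\<lambda>i. Dir u v i) ` {1..X u v} \<union> (\<lambda>w. Val u v w) ` {1..n}"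
        using uv by (cases s) (auto simp: S_def memD memV nD nV path_src_def path_tgt_def arc_tail_def arc_head_def)
    qed
    have "(\<Sum>s\<in>(\<lambda>i. Dir u v i) ` {1..X u v} \<union> (\<lambda>w. Val u v w) ` {1..n}. wgt s) =
          (\<Sum>s\<in>(\<lambda>i. Dir u v i) ` {1..X u v}. wgt s) + (\<Sum>s\<in>(\<lambda>w. Val u v w) ` {1..n}. wgt s)"
      by (rule sum.union_disjoint) auto
    also have "(\<Sum>s\<in>(\<lambda>i. Dir u v i) ` {1..X u v}. wgt s) = (\<Sum>i\<in>{1..X u v}. wgt (Dir u v i))"
      by (rule sum.reindex_cong[where l="\<lambda>i. Dir u v i"]) (auto simp: inj_on_def)
    also have "\<dots> = c * min (x u v) (real (X u v))"
      using x0 uv by (cases "X u v = 0") (auto simp: wgt_def)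
    also have "(\<Sum>s\<in>(\<lambda>w. Val u v w) ` {1..n}. wgt s) = (\<Sum>w\<in>{1..n}. wgt (Val u v w))"
      by (rule sum.reindex_cong[where l="\<lambda>w. Val u v w"]) (auto simp: inj_on_def)
    also have "\<dots> = c * \<rho> u v" using n1 by (simp add: wgt_def)
    also have "c * min (x u v) (real (X u v)) + c * \<rho> u v = c * x u v"
      by (simp add: \<rho>_def algebra_simps min_def max_def)
    finally show ?thesis using seteq by (simp add: c_def)
  qed
  have capacity: "(\<Sum>s\<in>{s\<in>S. e \<in> set (pth s)}. wgt s) \<le> c" if e: "e \<in> arcs n mult" for e
  proof -
    obtain a b i where eabi: "e = (a, b, i)" by (cases e)
    have ab: "a \<in> {1..n}" "b \<in> {1..n}" using e eabi by (auto simp: arcs_def)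
    show ?thesis
    proof (cases "i = 0")
      case False
      have sub: "{s\<in>S. e \<in> set (pth s)} \<subseteq> {Dir a b i}"
        using False eabi by (auto simp: S_def Sd_def Sv_def)
      have "(\<Sum>s\<in>{s\<in>S. e \<in> set (pth s)}. wgt s) \<le> (\<Sum>s\<in>{Dir a b i}. wgt s)"
      proof (rule sum_mono2[OF _ sub])
        fix s assume "s \<in> {Dir a b i} - {s\<in>S. e \<in> set (pth s)}"
        then show "0 \<le> wgt s" using x0 ab cpos by (auto simp: wgt_def)
      qed simp
      also have "\<dots> \<le> c"
      proof (cases "X a b = 0")
        case True then show ?thesis using cpos by (simp add: wgt_def)
      next
        case False
        have "min (x a b) (real (X a b)) / real (X a b) \<le> 1" using False by simp
        then have "c * (min (x a b) (real (X a b)) / real (X a b)) \<le> c * 1"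
          using cpos by (intro mult_left_mono) auto
        then show ?thesis by (simp add: wgt_def)
      qed
      finally show ?thesis .
    next
      case True
      define T1 where "T1 = (\<lambda>v. Val a v b) ` {1..n}"
      define T2 where "T2 = (\<lambda>u. Val u b a) ` {1..n}"
      have sub: "{s\<in>S. e \<in> set (pth s)} \<subseteq> T1 \<union> T2"
        using True eabi by (auto simp: S_def Sd_def Sv_def T1_def T2_def)
      have w12: "0 \<le> wgt s" if "s \<in> T1 \<union> T2" for s
        using that cpos by (auto simp: T1_def T2_def wgt_def \<rho>_def)
      have "(\<Sum>s\<in>{s\<in>S. e \<in> set (pth s)}. wgt s) \<le> (\<Sum>s\<in>T1 \<union> T2. wgt s)"
        by (rule sum_mono2[OF _ sub]) (use w12 in \<open>auto simp: T1_def T2_def\<close>)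
      also have "\<dots> \<le> (\<Sum>s\<in>T1. wgt s) + (\<Sum>s\<in>T2. wgt s)"
      proof -
        have "(\<Sum>s\<in>T1 \<union> T2. wgt s) + (\<Sum>s\<in>T1 \<inter> T2. wgt s) = (\<Sum>s\<in>T1. wgt s) + (\<Sum>s\<in>T2. wgt s)"
          by (rule sum.union_inter) (auto simp: T1_def T2_def)
        moreover have "(\<Sum>s\<in>T1 \<inter> T2. wgt s) \<ge> 0" using w12 by (intro sum_nonneg) auto
        ultimately show ?thesis by linarith
      qed
      also have "(\<Sum>s\<in>T1. wgt s) = (\<Sum>v=1..n. c * \<rho> a v / real n)"
        unfolding T1_def by (subst sum.reindex) (auto simp: inj_on_def wgt_def)
      also have "(\<Sum>s\<in>T2. wgt s) = (\<Sum>u=1..n. c * \<rho> u b / real n)"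
        unfolding T2_def by (subst sum.reindex) (auto simp: inj_on_def wgt_def)
      also have "(\<Sum>v=1..n. c * \<rho> a v / real n) + (\<Sum>u=1..n. c * \<rho> u b / real n) =
                 c / real n * ((\<Sum>v=1..n. \<rho> a v) + (\<Sum>u=1..n. \<rho> u b))"
        by (simp add: sum_distrib_left sum_divide_distrib algebra_simps)
      also have "\<dots> \<le> c / real n * (2 * L)"
      proof (rule mult_left_mono)
        have "(\<Sum>v=1..n. \<rho> a v) \<le> L" using rowL ab(1) by blast
        moreover have "(\<Sum>u=1..n. \<rho> u b) \<le> L" using colL ab(2) by blast
        ultimately show "(\<Sum>v=1..n. \<rho> a v) + (\<Sum>u=1..n. \<rho> u b) \<le> 2 * L" by linarith
      qed (use cpos in simp)
      also have "\<dots> \<le> c / real n * real n"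
        using Ln cpos by (intro mult_left_mono) auto
      also have "\<dots> = c" using n1 by simp
      finally show ?thesis .
    qed
  qed
  show ?thesis
    unfolding hosts_def
  proof (intro exI[of _ K] exI[of _ "\<lambda>k. pth (f k)"] exI[of _ "\<lambda>k. wgt (f k)"] conjI allI impI ballI)
    fix k assume "k < K"
    then show "is_path n mult (pth (f k))" "0 \<le> wgt (f k)" using inS isp wgt0 by auto
  next
    fix u v assume uv: "u \<in> {1..n}" "v \<in> {1..n}"
    have "(\<Sum>k\<in>{k. k < K \<and> path_src (pth (f k)) = u \<and> path_tgt (pth (f k)) = v}. wgt (f k)) =
          (\<Sum>s\<in>{s\<in>S. path_src (pth s) = u \<and> path_tgt (pth s) = v}. wgt s)"
      using sum_bij_filter[OF f[folded K_def], where Q="\<lambda>s. path_src (pth s) = u \<and> path_tgt (pth s) = v" and g=wgt]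
      by simp
    then show "(\<Sum>k\<in>{k. k < K \<and> path_src (pth (f k)) = u \<and> path_tgt (pth (f k)) = v}. wgt (f k)) =
          x u v / real (2 * n - 1)" using demand[OF uv] by simp
  next
    fix e assume e: "e \<in> arcs n mult"
    have "(\<Sum>k\<in>{k. k < K \<and> e \<in> set (pth (f k))}. wgt (f k)) = (\<Sum>s\<in>{s\<in>S. e \<in> set (pth s)}. wgt s)"
      using sum_bij_filter[OF f[folded K_def], where Q="\<lambda>s. e \<in> set (pth s)" and g=wgt] by simp
    then show "(\<Sum>k\<in>{k. k < K \<and> e \<in> set (pth (f k))}. wgt (f k)) \<le> 1 / real (2 * n - 1)"
      using capacity[OF e] by (simp add: c_def)
  qed
qed

lemma scale_hosts:
  fixes M :: "nat \<Rightarrow> nat \<Rightarrow> real" and k0 \<kappa> :: real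
  assumes h: "hosts n mult (\<lambda>u v. k0 * M u v)" and k: "0 \<le> \<kappa>" "\<kappa> \<le> k0" "0 < k0"
  shows "hosts n mult (\<lambda>u v. \<kappa> * M u v)"
proof -
  obtain K :: nat and P :: "nat \<Rightarrow> arc list" and d :: "nat \<Rightarrow> real" where h1: "\<forall>k<K. is_path n mult (P k) \<and> d k \<ge> 0"
    and h2: "\<forall>u\<in>{1..n}. \<forall>v\<in>{1..n}. (\<Sum>k\<in>{k. k < K \<and> path_src (P k) = u \<and> path_tgt (P k) = v}. d k) = k0 * M u v"
    and h3: "\<forall>e\<in>arcs n mult. (\<Sum>k\<in>{k. k < K \<and> e \<in> set (P k)}. d k) \<le> 1 / real (2 * n - 1)"
    using h unfolding hosts_def by blast
  define r where "r = \<kappa> / k0"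
  have r01: "0 \<le> r" "r \<le> 1" using k by (auto simp: r_def)
  show ?thesis unfolding hosts_def
  proof (intro exI[of _ K] exI[of _ P] exI[of _ "\<lambda>k. r * d k"] conjI allI impI ballI)
    fix k assume "k < K"
    then show "is_path n mult (P k)" "0 \<le> r * d k" using h1 r01 by auto
  next
    fix u v assume uv: "u \<in> {1..n}" "v \<in> {1..n}"
    have "(\<Sum>k\<in>{k. k < K \<and> path_src (P k) = u \<and> path_tgt (P k) = v}. r * d k) = r * (k0 * M u v)"
      using h2 uv by (simp add: sum_distrib_left[symmetric])
    then show "(\<Sum>k\<in>{k. k < K \<and> path_src (P k) = u \<and> path_tgt (P k) = v}. r * d k) = \<kappa> * M u v"
      using k by (simp add: r_def)
  next
    fix e assume e: "e \<in> arcs n mult"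
    have nn: "0 \<le> (\<Sum>k\<in>{k. k < K \<and> e \<in> set (P k)}. d k)" using h1 by (intro sum_nonneg) auto
    have "(\<Sum>k\<in>{k. k < K \<and> e \<in> set (P k)}. r * d k) = r * (\<Sum>k\<in>{k. k < K \<and> e \<in> set (P k)}. d k)"
      by (simp add: sum_distrib_left)
    also have "\<dots> \<le> 1 * (\<Sum>k\<in>{k. k < K \<and> e \<in> set (P k)}. d k)"
      using r01 nn by (intro mult_right_mono) auto
    also have "\<dots> \<le> 1 / real (2 * n - 1)" using h3 e by simp
    finally show "(\<Sum>k\<in>{k. k < K \<and> e \<in> set (P k)}. r * d k) \<le> 1 / real (2 * n - 1)" .
  qed
qed

lemma Vf_lin: "Vf y = 23/100 + 26/125 * y"
  unfolding Vf_def by (simp add: field_simps)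

lemma main_construct:
  fixes M :: "nat \<Rightarrow> nat \<Rightarrow> real" and n :: nat
  assumes n: "n \<ge> 10200" and ds: "doubly_stochastic n M"
  shows "\<exists>mult. regular_multigraph n (2 * n - 1) mult \<and>
           hosts n mult (\<lambda>u v. (5 * real n / (4 * real (2 * n - 1))) * M u v)"
proof -
  have M0: "0 \<le> M u v" if "u \<in> {1..n}" "v \<in> {1..n}" for u v
    using ds that unfolding doubly_stochastic_def by blast
  have Mr: "(\<Sum>v=1..n. M u v) = 1" if "u \<in> {1..n}" for u
    using ds that unfolding doubly_stochastic_def by blast
  have Mc: "(\<Sum>u=1..n. M u v) = 1" if "v \<in> {1..n}" for v
    using ds that unfolding doubly_stochastic_def by blast
  define x where "x u v = 5/4 * real n * M u v" for u v
  have x0: "\<forall>u\<in>{1..n}. \<forall>v\<in>{1..n}. 0 \<le> x u v" using M0 by (simp add: x_def)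
  have xr: "(\<Sum>v=1..n. x u v) = 5/4 * real n" if "u \<in> {1..n}" for u
    unfolding x_def using Mr[OF that] by (subst sum_distrib_left[symmetric]) simp
  have xc: "(\<Sum>u=1..n. x u v) = 5/4 * real n" if "v \<in> {1..n}" for v
    unfolding x_def using Mc[OF that] by (subst sum_distrib_left[symmetric]) simp
  have Vr: "(\<Sum>v=1..n. Vf (x u v)) = 49/100 * real n" if "u \<in> {1..n}" for u
  proof -
    have "(\<Sum>v=1..n. Vf (x u v)) = (\<Sum>v=1..n. 23/100 + 26/125 * x u v)"
      by (simp add: Vf_lin)
    also have "\<dots> = 23/100 * real n + 26/125 * (\<Sum>v=1..n. x u v)"
      by (simp add: sum.distrib sum_distrib_left)
    finally show ?thesis using xr[OF that] by simp
  qed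
  have Vc: "(\<Sum>u=1..n. Vf (x u v)) = 49/100 * real n" if "v \<in> {1..n}" for v
  proof -
    have "(\<Sum>u=1..n. Vf (x u v)) = (\<Sum>u=1..n. 23/100 + 26/125 * x u v)"
      by (simp add: Vf_lin)
    also have "\<dots> = 23/100 * real n + 26/125 * (\<Sum>u=1..n. x u v)"
      by (simp add: sum.distrib sum_distrib_left)
    finally show ?thesis using xc[OF that] by simp
  qed
  obtain Xr where X1: "\<forall>u\<in>{1..n}. \<forall>v\<in>{1..n}. Xr u v \<in> \<int> \<and> of_int \<lfloor>alp * x u v\<rfloor> \<le> Xr u v \<and> Xr u v \<le> of_int \<lceil>alp * x u v\<rceil>"
    and X2: "\<forall>u\<in>{1..n}. (\<Sum>v=1..n. Xr u v) < alp * (\<Sum>v=1..n. x u v) + 101"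
    and X3: "\<forall>v\<in>{1..n}. (\<Sum>u=1..n. Xr u v) < alp * (\<Sum>u=1..n. x u v) + 101"
    and X4: "\<forall>u\<in>{1..n}. (\<Sum>v=1..n. max 0 (x u v - Xr u v)) \<le> (\<Sum>v=1..n. Vf (x u v)) + 101"
    and X5: "\<forall>v\<in>{1..n}. (\<Sum>u=1..n. max 0 (x u v - Xr u v)) \<le> (\<Sum>u=1..n. Vf (x u v)) + 101"
    using class_round[OF x0] by blast
  define X where "X u v = nat \<lfloor>Xr u v\<rfloor>" for u v
  have XX: "real (X u v) = Xr u v" if uv: "u \<in> {1..n}" "v \<in> {1..n}" for u v
  proof -
    have h: "Xr u v \<in> \<int> \<and> of_int \<lfloor>alp * x u v\<rfloor> \<le> Xr u v" using X1 uv by blast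
    have "0 \<le> alp * x u v" using x0 uv by (simp add: alp_def)
    then have "0 \<le> \<lfloor>alp * x u v\<rfloor>" by simp
    then have "0 \<le> Xr u v" using h by linarith
    moreover obtain z where "Xr u v = of_int z" using h by (auto elim: Ints_cases)
    ultimately show ?thesis by (simp add: X_def)
  qed
  define L where "L = 49/100 * real n + 101"
  have rowX: "(\<Sum>v=1..n. X u v) \<le> n - 1" if u: "u \<in> {1..n}" for u
  proof -
    have "real (\<Sum>v=1..n. X u v) = (\<Sum>v=1..n. Xr u v)" using XX u by simp
    also have "\<dots> < alp * (\<Sum>v=1..n. x u v) + 101" using X2 u by blast
    also have "\<dots> = alp * (5/4 * real n) + 101" using xr[OF u] by simp
    also have "\<dots> \<le> real n - 1" using n by (simp add: alp_def)
    finally show ?thesis using n by linarith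
  qed
  have colX: "(\<Sum>u=1..n. X u v) \<le> n - 1" if v: "v \<in> {1..n}" for v
  proof -
    have "real (\<Sum>u=1..n. X u v) = (\<Sum>u=1..n. Xr u v)" using XX v by simp
    also have "\<dots> < alp * (\<Sum>u=1..n. x u v) + 101" using X3 v by blast
    also have "\<dots> = alp * (5/4 * real n) + 101" using xc[OF v] by simp
    also have "\<dots> \<le> real n - 1" using n by (simp add: alp_def)
    finally show ?thesis using n by linarith
  qed
  have rowR: "\<forall>u\<in>{1..n}. (\<Sum>v=1..n. max 0 (x u v - real (X u v))) \<le> L"
  proof
    fix u assume u: "u \<in> {1..n}"
    have "(\<Sum>v=1..n. max 0 (x u v - real (X u v))) = (\<Sum>v=1..n. max 0 (x u v - Xr u v))"
      using XX u by simp
    also have "\<dots> \<le> (\<Sum>v=1..n. Vf (x u v)) + 101" using X4 u by blast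
    also have "\<dots> = L" using Vr[OF u] by (simp add: L_def)
    finally show "(\<Sum>v=1..n. max 0 (x u v - real (X u v))) \<le> L" .
  qed
  have colR: "\<forall>v\<in>{1..n}. (\<Sum>u=1..n. max 0 (x u v - real (X u v))) \<le> L"
  proof
    fix v assume v: "v \<in> {1..n}"
    have "(\<Sum>u=1..n. max 0 (x u v - real (X u v))) = (\<Sum>u=1..n. max 0 (x u v - Xr u v))"
      using XX v by simp
    also have "\<dots> \<le> (\<Sum>u=1..n. Vf (x u v)) + 101" using X5 v by blast
    also have "\<dots> = L" using Vc[OF v] by (simp add: L_def)
    finally show "(\<Sum>u=1..n. max 0 (x u v - real (X u v))) \<le> L" .
  qed
  have Ln: "2 * L \<le> real n" using n by (simp add: L_def)
  define a where "a u = (n - 1) - (\<Sum>v=1..n. X u v)" for u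
  define b where "b v = (n - 1) - (\<Sum>u=1..n. X u v)" for v
  have sa: "(\<Sum>u=1..n. a u) = n * (n - 1) - (\<Sum>u=1..n. \<Sum>v=1..n. X u v)"
    unfolding a_def by (subst sum_subtractf_nat) (use rowX in auto)
  have sb: "(\<Sum>v=1..n. b v) = n * (n - 1) - (\<Sum>v=1..n. \<Sum>u=1..n. X u v)"
    unfolding b_def by (subst sum_subtractf_nat) (use colX in auto)
  have "(\<Sum>u=1..n. a u) = (\<Sum>v=1..n. b v)" using sa sb sum.swap[of "\<lambda>u v. X u v" "{1..n}" "{1..n}"] by simp
  then obtain P where P1: "\<forall>u\<in>{1..n}. (\<Sum>v=1..n. P u v) = a u" and P2: "\<forall>v\<in>{1..n}. (\<Sum>u=1..n. P u v) = b v"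
    using complete_margins[of "{1..n}" "{1..n}" a "\<Sum>u=1..n. a u" b] by auto
  define mult where "mult u v = X u v + P u v + 1" for u v
  have reg: "regular_multigraph n (2 * n - 1) mult"
    unfolding regular_multigraph_def
  proof (intro conjI ballI)
    fix u assume u: "u \<in> {1..n}"
    have "(\<Sum>v=1..n. mult u v) = (\<Sum>v=1..n. X u v) + (\<Sum>v=1..n. P u v) + n"
      unfolding mult_def sum.distrib by simp
    also have "\<dots> = 2 * n - 1" using P1 u rowX[OF u] n by (simp add: a_def)
    finally show "(\<Sum>v=1..n. mult u v) = 2 * n - 1" .
  next
    fix v assume v: "v \<in> {1..n}"
    have "(\<Sum>u=1..n. mult u v) = (\<Sum>u=1..n. X u v) + (\<Sum>u=1..n. P u v) + n"
      unfolding mult_def sum.distrib by simp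
    also have "\<dots> = 2 * n - 1" using P2 v colX[OF v] n by (simp add: b_def)
    finally show "(\<Sum>u=1..n. mult u v) = 2 * n - 1" .
  qed
  have Xm: "\<forall>u\<in>{1..n}. \<forall>v\<in>{1..n}. X u v < mult u v" by (simp add: mult_def)
  have "hosts n mult (\<lambda>u v. x u v / real (2 * n - 1))"
    using hosting[of n x X mult L] n x0 Xm rowR colR Ln by simp
  moreover have "(\<lambda>u v. x u v / real (2 * n - 1)) = (\<lambda>u v. (5 * real n / (4 * real (2 * n - 1))) * M u v)"
    by (intro ext) (simp add: x_def field_simps)
  ultimately show ?thesis using reg by auto
qed

theorem theorem3p3:
  fixes \<kappa> :: real
  assumes "0 \<le> \<kappa>" and "\<kappa> < 5 / 8"
  shows "\<exists>n\<kappa>::nat. n\<kappa> > 0 \<and>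
    (\<forall>n \<ge> n\<kappa>. \<forall>M. doubly_stochastic n M \<longrightarrow>
       (\<exists>mult. regular_multigraph n (2 * n - 1) mult \<and>
                hosts n mult (\<lambda>u v. \<kappa> * M u v)))"
proof -
  have "\<forall>n \<ge> (10200::nat). \<forall>M. doubly_stochastic n M \<longrightarrow>
       (\<exists>mult. regular_multigraph n (2 * n - 1) mult \<and> hosts n mult (\<lambda>u v. \<kappa> * M u v))"
  proof (intro allI impI)
    fix n :: nat and M :: "nat \<Rightarrow> nat \<Rightarrow> real"
    assume n: "n \<ge> 10200" and ds: "doubly_stochastic n M"
    obtain mult where reg: "regular_multigraph n (2 * n - 1) mult"
      and h: "hosts n mult (\<lambda>u v. (5 * real n / (4 * real (2 * n - 1))) * M u v)"
      using main_construct[OF n ds] by blast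
    have r: "real (2 * n - 1) = 2 * real n - 1" using n by (simp add: of_nat_diff)
    have pos: "2 * real n - 1 > 0" using n by simp
    have "5 / 8 \<le> 5 * real n / (4 * (2 * real n - 1))" using pos by (simp add: field_simps)
    then have k: "\<kappa> \<le> 5 * real n / (4 * real (2 * n - 1))" "0 < 5 * real n / (4 * real (2 * n - 1))"
      using assms r pos n by auto
    have "hosts n mult (\<lambda>u v. \<kappa> * M u v)"
      by (rule scale_hosts[OF h assms(1) k(1) k(2)])
    then show "\<exists>mult. regular_multigraph n (2 * n - 1) mult \<and> hosts n mult (\<lambda>u v. \<kappa> * M u v)"
      using reg by blast
  qed
  then show ?thesis by (intro exI[of _ "10200::nat"]) auto
qed

end
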